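(* Let $\mathcal L$ be a linearly ordered non-discrete MV-algebra and let $0<p<q<1$ in $L$. Then $$\,]q,1]\sqsubseteq\!\!\to\,]p,1]=[q\to p,1].$$
   Context: $\mathcal L=(L,\oplus,\lnot,0)$ is a linearly ordered MV-algebra. We write $1=\lnot 0$ and $x\to y=\lnot x\oplus y$. Non-discrete means no element has an immediate successor or an immediate predecessor. We write $[p,1]=\{x: x\ge p\}$ and $]p,1]=\{x:x>p\}$. For an upward-closed $\mathcal F$ and $a\in L$, let $\mathcal F_a=\{z:z\to a\notin\mathcal F\}$. For upward-closed $\mathcal F\subseteq\mathcal G$ we put $\mathcal F\sqsubseteq\!\!\to\mathcal G=\bigcap_{a\in L\setminus\mathcal G}\mathcal F_a$. *)

theory Defs
  imports Main
begin

text \<open>An MV-algebra (L, oplus, neg, 0) whose carrier is the whole type 'a,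
  given by the standard (Chang/Mangani) axioms.\<close>
definition mv_algebra :: "('a \<Rightarrow> 'a \<Rightarrow> 'a) \<Rightarrow> ('a \<Rightarrow> 'a) \<Rightarrow> 'a \<Rightarrow> bool" where
  "mv_algebra oplus neg zero \<longleftrightarrow>
     (\<forall>x y z. oplus x (oplus y z) = oplus (oplus x y) z) \<and>
     (\<forall>x y. oplus x y = oplus y x) \<and>
     (\<forall>x. oplus x zero = x) \<and>
     (\<forall>x. neg (neg x) = x) \<and>
     (\<forall>x. oplus x (neg zero) = neg zero) \<and>
     (\<forall>x y. oplus (neg (oplus (neg x) y)) y = oplus (neg (oplus (neg y) x)) x)"

definition mv_imp :: "('a \<Rightarrow> 'a \<Rightarrow> 'a) \<Rightarrow> ('a \<Rightarrow> 'a) \<Rightarrow> 'a \<Rightarrow> 'a \<Rightarrow> 'a" where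
  "mv_imp oplus neg x y = oplus (neg x) y"

definition mv_le :: "('a \<Rightarrow> 'a \<Rightarrow> 'a) \<Rightarrow> ('a \<Rightarrow> 'a) \<Rightarrow> 'a \<Rightarrow> 'a \<Rightarrow> 'a \<Rightarrow> bool" where
  "mv_le oplus neg zero x y \<longleftrightarrow> mv_imp oplus neg x y = neg zero"

definition mv_less :: "('a \<Rightarrow> 'a \<Rightarrow> 'a) \<Rightarrow> ('a \<Rightarrow> 'a) \<Rightarrow> 'a \<Rightarrow> 'a \<Rightarrow> 'a \<Rightarrow> bool" where
  "mv_less oplus neg zero x y \<longleftrightarrow> mv_le oplus neg zero x y \<and> x \<noteq> y"

definition mv_linear :: "('a \<Rightarrow> 'a \<Rightarrow> 'a) \<Rightarrow> ('a \<Rightarrow> 'a) \<Rightarrow> 'a \<Rightarrow> bool" where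
  "mv_linear oplus neg zero \<longleftrightarrow> (\<forall>x y. mv_le oplus neg zero x y \<or> mv_le oplus neg zero y x)"

definition mv_immediate_succ :: "('a \<Rightarrow> 'a \<Rightarrow> 'a) \<Rightarrow> ('a \<Rightarrow> 'a) \<Rightarrow> 'a \<Rightarrow> 'a \<Rightarrow> 'a \<Rightarrow> bool" where
  "mv_immediate_succ oplus neg zero x y \<longleftrightarrow>
     mv_less oplus neg zero x y \<and> \<not> (\<exists>z. mv_less oplus neg zero x z \<and> mv_less oplus neg zero z y)"

definition mv_non_discrete :: "('a \<Rightarrow> 'a \<Rightarrow> 'a) \<Rightarrow> ('a \<Rightarrow> 'a) \<Rightarrow> 'a \<Rightarrow> bool" where
  "mv_non_discrete oplus neg zero \<longleftrightarrow>
     (\<forall>x. \<not> (\<exists>y. mv_immediate_succ oplus neg zero x y)) \<and>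
     (\<forall>x. \<not> (\<exists>y. mv_immediate_succ oplus neg zero y x))"

definition mv_Fa :: "('a \<Rightarrow> 'a \<Rightarrow> 'a) \<Rightarrow> ('a \<Rightarrow> 'a) \<Rightarrow> 'a set \<Rightarrow> 'a \<Rightarrow> 'a set" where
  "mv_Fa oplus neg F a = {z. mv_imp oplus neg z a \<notin> F}"

definition mv_sqimp :: "('a \<Rightarrow> 'a \<Rightarrow> 'a) \<Rightarrow> ('a \<Rightarrow> 'a) \<Rightarrow> 'a set \<Rightarrow> 'a set \<Rightarrow> 'a set" where
  "mv_sqimp oplus neg F G = (\<Inter>a \<in> UNIV - G. mv_Fa oplus neg F a)"

end

theory Submission
  imports Defs
begin

locale mvA =
  fixes oplus :: "'a \<Rightarrow> 'a \<Rightarrow> 'a" (infixl "\<oplus>" 65) and neg :: "'a \<Rightarrow> 'a" and zero :: 'a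
  assumes mv: "mv_algebra oplus neg zero"
begin

lemma ax:
  "x \<oplus> (y \<oplus> z) = x \<oplus> y \<oplus> z" "x \<oplus> y = y \<oplus> x" "x \<oplus> zero = x" "neg (neg x) = x"
  "x \<oplus> neg zero = neg zero" "neg (neg x \<oplus> y) \<oplus> y = neg (neg y \<oplus> x) \<oplus> x"
  using mv unfolding mv_algebra_def by blast+

abbreviation le (infix "\<preceq>" 50) where "le x y \<equiv> mv_le oplus neg zero x y"

lemma le_def': "x \<preceq> y \<longleftrightarrow> neg x \<oplus> y = neg zero"
  by (simp add: mv_le_def mv_imp_def)

lemma negx_x: "neg x \<oplus> x = neg zero"
proof -
  have "neg (neg x \<oplus> neg zero) \<oplus> neg zero = neg (neg (neg zero) \<oplus> x) \<oplus> x" by (rule ax(6))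
  thus ?thesis using ax by (metis)
qed

lemma le_ex: "x \<preceq> y \<Longrightarrow> \<exists>z. y = x \<oplus> z"
proof -
  assume "x \<preceq> y"
  hence h: "neg x \<oplus> y = neg zero" by (simp add: le_def')
  have "neg (neg x \<oplus> y) \<oplus> y = y" using h ax by (metis)
  hence "y = neg (neg y \<oplus> x) \<oplus> x" using ax(6) by metis
  thus ?thesis using ax(2) by metis
qed

lemma ex_le: "y = x \<oplus> z \<Longrightarrow> x \<preceq> y"
  unfolding le_def' by (metis ax(1) ax(2) ax(5) negx_x)

lemma le_trans [trans]: "x \<preceq> y \<Longrightarrow> y \<preceq> w \<Longrightarrow> x \<preceq> w"
  by (metis ax(1) ex_le le_ex)

lemma le_antisym: "x \<preceq> y \<Longrightarrow> y \<preceq> x \<Longrightarrow> x = y"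
  unfolding le_def' by (metis ax(2) ax(3) ax(4) ax(6))

lemma mono: "x \<preceq> y \<Longrightarrow> x \<oplus> z \<preceq> y \<oplus> z"
  by (metis ax(1) ax(2) ex_le le_ex)

lemma anti: "x \<preceq> y \<Longrightarrow> neg y \<preceq> neg x"
  unfolding le_def' by (metis ax(2) ax(4))

lemma le_one: "x \<preceq> neg zero"
  unfolding le_def' by (simp add: ax(5))

end

theorem mainTheorem14:
  fixes oplus :: "'a \<Rightarrow> 'a \<Rightarrow> 'a" and neg :: "'a \<Rightarrow> 'a" and zero :: 'a and p q :: 'a
  assumes "mv_algebra oplus neg zero"
    and "mv_linear oplus neg zero"
    and "mv_non_discrete oplus neg zero"
    and "mv_less oplus neg zero zero p"
    and "mv_less oplus neg zero p q"
    and "mv_less oplus neg zero q (neg zero)"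
  shows "mv_sqimp oplus neg {x. mv_less oplus neg zero q x} {x. mv_less oplus neg zero p x}
         = {x. mv_le oplus neg zero (mv_imp oplus neg q p) x}"
proof -
  interpret mvA oplus neg zero by (rule mvA.intro) (rule assms(1))
  have lin: "\<And>x y. x \<preceq> y \<or> y \<preceq> x" using assms(2) unfolding mv_linear_def by blast
  have pq: "p \<preceq> q" and q1: "q \<noteq> neg zero" using assms(5,6) unfolding mv_less_def by auto
  have nl: "\<And>x y. (\<not> mv_less oplus neg zero x y) \<longleftrightarrow> y \<preceq> x"
    unfolding mv_less_def using lin le_antisym by metis
  have key: "\<And>z. z \<in> mv_sqimp oplus neg {x. mv_less oplus neg zero q x} {x. mv_less oplus neg zero p x}
      \<longleftrightarrow> (\<forall>a. a \<preceq> p \<longrightarrow> oplus (neg z) a \<preceq> q)"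
    unfolding mv_sqimp_def mv_Fa_def mv_imp_def using nl by auto
  show ?thesis
  proof (intro set_eqI iffI)
    fix z assume "z \<in> mv_sqimp oplus neg {x. mv_less oplus neg zero q x} {x. mv_less oplus neg zero p x}"
    hence h: "oplus (neg z) p \<preceq> q" using key le_antisym lin by blast
    define w where "w = neg z"
    have zw: "z = neg w" using w_def ax(4) by simp
    have h': "oplus w p \<preceq> q" using h w_def by simp
    show "z \<in> {x. mv_le oplus neg zero (mv_imp oplus neg q p) x}"
    proof (cases "w \<preceq> neg p")
      case True
      have "oplus (neg q) p \<preceq> oplus (neg (oplus w p)) p" using mono[OF anti[OF h']] .
      also have "oplus (neg (oplus w p)) p = oplus (neg (oplus (neg p) (neg w))) (neg w)"
        by (metis ax(4) ax(6))
      also have "oplus (neg p) (neg w) = neg zero" using True unfolding le_def' by (metis ax(2) ax(4))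
      finally have "oplus (neg q) p \<preceq> neg w" by (metis ax(2) ax(3) ax(4))
      thus ?thesis using zw by (simp add: mv_imp_def)
    next
      case False
      hence "neg p \<preceq> w" using lin by blast
      hence "oplus (neg p) p \<preceq> oplus w p" by (rule mono)
      hence "neg zero \<preceq> q" using negx_x h' le_trans by metis
      hence False using q1 le_one le_antisym by blast
      thus ?thesis ..
    qed
  next
    fix z assume "z \<in> {x. mv_le oplus neg zero (mv_imp oplus neg q p) x}"
    hence hz: "oplus (neg q) p \<preceq> z" by (simp add: mv_imp_def)
    have "\<forall>a. a \<preceq> p \<longrightarrow> oplus (neg z) a \<preceq> q"
    proof (intro allI impI)
      fix a assume ap: "a \<preceq> p"
      have "oplus (neg z) a \<preceq> oplus (neg z) p" using mono[OF ap, of "neg z"] ax(2) by metis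
      also have "oplus (neg z) p \<preceq> oplus (neg (oplus (neg q) p)) p" using mono[OF anti[OF hz]] .
      also have "oplus (neg (oplus (neg q) p)) p = oplus (neg (oplus (neg p) q)) q" by (rule ax(6))
      also have "\<dots> = q" using pq unfolding le_def' by (metis ax(2) ax(3) ax(4))
      finally show "oplus (neg z) a \<preceq> q" by simp
    qed
    thus "z \<in> mv_sqimp oplus neg {x. mv_less oplus neg zero q x} {x. mv_less oplus neg zero p x}"
      using key by blast
  qed
qed

end
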